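(* Let $(\mathfrak{h},\langle\cdot,\cdot\rangle)$ be a Kundt pair on $\mathfrak{e}_0(2)$. Then it is equivalent to $(\mathfrak{h}_0,\langle\cdot,\cdot\rangle_0)$ where the matrix of $\langle\cdot,\cdot\rangle_0$ in the basis $(X_1,X_2,X_3)$ is $\begin{pmatrix}0&1&0\\1&0&0\\0&0&\mu\end{pmatrix}$ with $\mu>0$, and $\mathfrak{h}_0=\mathrm{span}\{X_2,X_3\}$.
   Context: $\mathfrak{e}_0(2)$ has basis $(X_1,X_2,X_3)$ with only nonzero brackets $[X_1,X_2]=X_3$, $[X_1,X_3]=-X_2$. For a Lorentzian scalar product $\langle\cdot,\cdot\rangle$ on a Lie algebra $\mathfrak{g}$, the Levi-Civita product is defined by $2\langle u\bullet v,w\rangle=\langle[u,v],w\rangle+\langle[w,u],v\rangle+\langle[w,v],u\rangle$. A Kundt pair on $\mathfrak{g}$ is a pair consisting of a Lorentzian scalar product $\langle\cdot,\cdot\rangle$ and a codimension one subalgebra $\mathfrak{h}$ which is $\langle\cdot,\cdot\rangle$-degenerate, stable by $\bullet$, and such that $e\bullet e=0$ for all $e\in\mathfrak{h}^\perp$. Two Kundt pairs $(\mathfrak{h}_1,\langle\cdot,\cdot\rangle_1)$, $(\mathfrak{h}_2,\langle\cdot,\cdot\rangle_2)$ are equivalent if there is a Lie algebra automorphism $\phi$ of $\mathfrak{g}$ with $\phi(\mathfrak{h}_1)=\mathfrak{h}_2$ and $\phi^*\langle\cdot,\cdot\rangle_2=\langle\cdot,\cdot\rangle_1$. *)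

theory Defs
  imports "HOL-Analysis.Analysis"
begin

text \<open>The Lie algebra e_0(2) realised on real^3, with basis X1, X2, X3 the standard basis
  vectors and brackets [X1,X2] = X3, [X1,X3] = -X2, [X2,X3] = 0 (extended bilinearly).\<close>

definition X1 :: "real^3" where "X1 = vector [1, 0, 0]"
definition X2 :: "real^3" where "X2 = vector [0, 1, 0]"
definition X3 :: "real^3" where "X3 = vector [0, 0, 1]"

definition e02_bracket :: "real^3 \<Rightarrow> real^3 \<Rightarrow> real^3" where
  "e02_bracket u v =
     (u$1 * v$2 - u$2 * v$1) *\<^sub>R X3 - (u$1 * v$3 - u$3 * v$1) *\<^sub>R X2"

definition scalar_product :: "(real^3 \<Rightarrow> real^3 \<Rightarrow> real) \<Rightarrow> bool" where
  "scalar_product g \<longleftrightarrow> bilinear g \<and> (\<forall>u v. g u v = g v u)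
     \<and> (\<forall>u. (\<forall>v. g u v = 0) \<longrightarrow> u = 0)"

definition lorentzian :: "(real^3 \<Rightarrow> real^3 \<Rightarrow> real) \<Rightarrow> bool" where
  "lorentzian g \<longleftrightarrow> scalar_product g \<and>
     (\<exists>e1 e2 e3. independent {e1, e2, e3} \<and> e1 \<noteq> e2 \<and> e1 \<noteq> e3 \<and> e2 \<noteq> e3 \<and>
        g e1 e1 = -1 \<and> g e2 e2 = 1 \<and> g e3 e3 = 1 \<and>
        g e1 e2 = 0 \<and> g e1 e3 = 0 \<and> g e2 e3 = 0)"

definition levi_civita :: "(real^3 \<Rightarrow> real^3 \<Rightarrow> real) \<Rightarrow> real^3 \<Rightarrow> real^3 \<Rightarrow> real^3" where
  "levi_civita g u v = (THE x. \<forall>w. 2 * g x w =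
      g (e02_bracket u v) w + g (e02_bracket w u) v + g (e02_bracket w v) u)"

definition orth_compl :: "(real^3 \<Rightarrow> real^3 \<Rightarrow> real) \<Rightarrow> (real^3) set \<Rightarrow> (real^3) set" where
  "orth_compl g h = {e. \<forall>u\<in>h. g e u = 0}"

definition subalgebra :: "(real^3) set \<Rightarrow> bool" where
  "subalgebra h \<longleftrightarrow> subspace h \<and> (\<forall>u\<in>h. \<forall>v\<in>h. e02_bracket u v \<in> h)"

definition kundt_pair :: "(real^3) set \<Rightarrow> (real^3 \<Rightarrow> real^3 \<Rightarrow> real) \<Rightarrow> bool" where
  "kundt_pair h g \<longleftrightarrow> lorentzian g \<and> subalgebra h \<and> dim h = 2 \<and>
     (\<exists>u\<in>h. u \<noteq> 0 \<and> (\<forall>v\<in>h. g u v = 0)) \<and>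
     (\<forall>u\<in>h. \<forall>v\<in>h. levi_civita g u v \<in> h) \<and>
     (\<forall>e\<in>orth_compl g h. levi_civita g e e = 0)"

definition e02_automorphism :: "(real^3 \<Rightarrow> real^3) \<Rightarrow> bool" where
  "e02_automorphism \<phi> \<longleftrightarrow> linear \<phi> \<and> bij \<phi> \<and>
     (\<forall>u v. \<phi> (e02_bracket u v) = e02_bracket (\<phi> u) (\<phi> v))"

definition kundt_equivalent ::
  "(real^3) set \<Rightarrow> (real^3 \<Rightarrow> real^3 \<Rightarrow> real) \<Rightarrow> (real^3) set \<Rightarrow> (real^3 \<Rightarrow> real^3 \<Rightarrow> real) \<Rightarrow> bool" where
  "kundt_equivalent h1 g1 h2 g2 \<longleftrightarrow> (\<exists>\<phi>. e02_automorphism \<phi> \<and> \<phi> ` h1 = h2 \<and>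
      (\<forall>u v. g2 (\<phi> u) (\<phi> v) = g1 u v))"

definition g0 :: "real \<Rightarrow> real^3 \<Rightarrow> real^3 \<Rightarrow> real" where
  "g0 \<mu> u v = u$1 * v$2 + u$2 * v$1 + \<mu> * (u$3 * v$3)"

definition h0 :: "(real^3) set" where "h0 = span {X2, X3}"

end

theory Submission
  imports Defs
begin

lemma X_comps[simp]:
  "X1$1 = 1" "X1$2 = 0" "X1$3 = 0" "X2$1 = 0" "X2$2 = 1" "X2$3 = 0"
  "X3$1 = 0" "X3$2 = 0" "X3$3 = 1"
  by (simp_all add: X1_def X2_def X3_def)

lemma br_comps[simp]:
  "e02_bracket u v $ 1 = 0"
  "e02_bracket u v $ 2 = -(u$1 * v$3 - u$3 * v$1)"
  "e02_bracket u v $ 3 = u$1 * v$2 - u$2 * v$1"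
  by (simp_all add: e02_bracket_def)

lemma bil:
  assumes "bilinear g"
  shows "g (x + y) z = g x z + g y z" "g x (y + z) = g x y + g x z"
    "g (c *\<^sub>R x) z = c * g x z" "g x (c *\<^sub>R z) = c * g x z"
    "g (x - y) z = g x z - g y z" "g x (y - z) = g x y - g x z"
    "g (-x) z = - g x z" "g x (-z) = - g x z"
    "g 0 z = 0" "g x 0 = 0"
  using assms
  by (simp_all add: bilinear_ladd bilinear_radd bilinear_lmul bilinear_rmul
      bilinear_lsub bilinear_rsub bilinear_lneg bilinear_rneg bilinear_lzero bilinear_rzero)

lemma vec3_eq: "(x::real^3) = y \<longleftrightarrow> x$1 = y$1 \<and> x$2 = y$2 \<and> x$3 = y$3"
  by (simp add: vec_eq_iff forall_3)

lemma cs2: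
  fixes c1 c2 c3 d1 d2 d3 :: real
  assumes "c2^2+c3^2 = c1^2" "c2*d2+c3*d3 = c1*d1" "d2^2+d3^2 < d1^2"
    "(c1,c2,c3) \<noteq> (0,0,0)"
  shows False
proof -
  have id: "(c2*d2+c3*d3)^2 + (c2*d3-c3*d2)^2 = (c2^2+c3^2)*(d2^2+d3^2)" by algebra
  have c1: "c1 \<noteq> 0" using assms(1,4) by (auto simp: sum_power2_eq_zero_iff)
  have "(c1*d1)^2 = (c2*d2+c3*d3)^2" using assms(2) by (simp add: algebra_simps)
  also have "\<dots> \<le> (c2^2+c3^2)*(d2^2+d3^2)" using id by (smt (verit) zero_le_power2)
  also have "\<dots> = c1^2*(d2^2+d3^2)" using assms(1) by simp
  also have "\<dots> < c1^2 * d1^2" using assms(3) c1 by (intro mult_strict_left_mono) auto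
  finally show False by (simp add: power_mult_distrib)
qed

lemma rot_solve:
  fixes a b p q N :: real
  assumes "N = a^2+b^2" "N \<noteq> 0"
  shows "((p*a+q*b)/N)*a - ((q*a-p*b)/N)*b = p" "((p*a+q*b)/N)*b + ((q*a-p*b)/N)*a = q"
proof -
  have "((p*a+q*b)/N)*a - ((q*a-p*b)/N)*b = (p*(a^2+b^2))/N"
    using assms(2) by (simp add: field_simps power2_eq_square)
  then show "((p*a+q*b)/N)*a - ((q*a-p*b)/N)*b = p" using assms(2) by (simp add: assms(1)[symmetric])
  have "((p*a+q*b)/N)*b + ((q*a-p*b)/N)*a = (q*(a^2+b^2))/N"
    using assms(2) by (simp add: field_simps power2_eq_square)
  then show "((p*a+q*b)/N)*b + ((q*a-p*b)/N)*a = q" using assms(2) by (simp add: assms(1)[symmetric])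
qed

lemma cramer2:
  fixes a2 a3 b2 b3 u2 u3 d :: real
  assumes "d = a2*b3 - a3*b2" "d \<noteq> 0"
  shows "((u2*b3 - u3*b2)/d)*a2 + ((a2*u3 - a3*u2)/d)*b2 = u2"
    "((u2*b3 - u3*b2)/d)*a3 + ((a2*u3 - a3*u2)/d)*b3 = u3"
proof -
  have "((u2*b3 - u3*b2)/d)*a2 + ((a2*u3 - a3*u2)/d)*b2 = u2*(a2*b3 - a3*b2)/d"
    using assms(2) by (simp add: field_simps)
  then show "((u2*b3 - u3*b2)/d)*a2 + ((a2*u3 - a3*u2)/d)*b2 = u2"
    using assms(2) by (simp add: assms(1)[symmetric])
  have "((u2*b3 - u3*b2)/d)*a3 + ((a2*u3 - a3*u2)/d)*b3 = u3*(a2*b3 - a3*b2)/d"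
    using assms(2) by (simp add: field_simps)
  then show "((u2*b3 - u3*b2)/d)*a3 + ((a2*u3 - a3*u2)/d)*b3 = u3"
    using assms(2) by (simp add: assms(1)[symmetric])
qed

lemma h_eq_S:
  assumes "subalgebra h" "dim h = 2"
  shows "h = {x. x$1 = 0}"
proof -
  have sub: "subspace h" using assms by (simp add: subalgebra_def)
  have brh: "\<And>u v. u\<in>h \<Longrightarrow> v\<in>h \<Longrightarrow> e02_bracket u v \<in> h"
    using assms(1) subalgebra_def by blast
  have notin1: "\<exists>v\<in>h. v \<notin> span {x}" for x
  proof (rule ccontr)
    assume "\<not> ?thesis" then have "h \<subseteq> span {x}" by auto
    then have "dim h \<le> dim (span {x})" by (rule dim_subset)
    also have "\<dots> \<le> 1" by (simp add: dim_span dim_singleton)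
    finally show False using assms(2) by simp
  qed
  have first0: "x$1 = 0" if xh: "x \<in> h" for x
  proof (rule ccontr)
    assume x1: "x$1 \<noteq> 0"
    obtain v where vh: "v\<in>h" "v \<notin> span {x}" using notin1 by blast
    define w where "w = v - (v$1/x$1) *\<^sub>R x"
    have wh: "w \<in> h" using sub vh xh by (simp add: w_def subspace_diff subspace_mul)
    have w1: "w$1 = 0" using x1 by (simp add: w_def)
    have wnz: "w \<noteq> 0"
    proof
      assume "w = 0" then have "v = (v$1/x$1) *\<^sub>R x" by (simp add: w_def)
      then have "v \<in> span {x}" by (auto simp: span_singleton)
      with vh show False by simp
    qed
    define Jw where "Jw = (1/x$1) *\<^sub>R e02_bracket x w"
    have Jwh: "Jw \<in> h" using sub brh xh wh by (simp add: Jw_def subspace_mul)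
    have Jwc: "Jw$1 = 0" "Jw$2 = - w$3" "Jw$3 = w$2" using x1 w1 by (simp_all add: Jw_def)
    define N where "N = (w$2)^2 + (w$3)^2"
    have N: "N \<noteq> 0" using wnz w1 by (auto simp: N_def vec3_eq sum_power2_eq_zero_iff)
    have "y \<in> h" for y
    proof -
      define r where "r = y - (y$1/x$1) *\<^sub>R x"
      define c2 where "c2 = (r$2*w$2 + r$3*w$3)/N"
      define c3 where "c3 = (r$3*w$2 - r$2*w$3)/N"
      have e2: "c2*w$2 - c3*w$3 = r$2" using N rot_solve[OF N_def N] unfolding c2_def c3_def by simp
      have e3: "c2*w$3 + c3*w$2 = r$3" using N rot_solve[OF N_def N] unfolding c2_def c3_def by simp
      have "y = (y$1/x$1) *\<^sub>R x + c2 *\<^sub>R w + c3 *\<^sub>R Jw"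
        using x1 w1 Jwc e2 e3 unfolding vec3_eq by (simp add: r_def)
      then show ?thesis using sub xh wh Jwh by (metis subspace_add subspace_mul)
    qed
    then have "h = UNIV" by auto
    then have "dim h = 3" by (simp add: dim_UNIV)
    with assms(2) show False by simp
  qed
  obtain a where a: "a \<in> h" "a \<noteq> 0" using notin1[of 0] by auto
  obtain b where b: "b \<in> h" "b \<notin> span {a}" using notin1 by blast
  have a1: "a$1 = 0" and b1: "b$1 = 0" using a b first0 by auto
  define d where "d = a$2*b$3 - a$3*b$2"
  have d: "d \<noteq> 0"
  proof
    assume d0: "d = 0"
    have "b \<in> span {a}"
    proof (cases "a$2 = 0")
      case False
      then have "b = (b$2/a$2) *\<^sub>R a" using a1 b1 d0 unfolding vec3_eq d_def
        by (simp add: field_simps)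
      then show ?thesis by (auto simp: span_singleton)
    next
      case True
      then have "a$3 \<noteq> 0" using a a1 by (auto simp: vec3_eq)
      then have "b = (b$3/a$3) *\<^sub>R a" using True a1 b1 d0 unfolding vec3_eq d_def
        by (simp add: field_simps)
      then show ?thesis by (auto simp: span_singleton)
    qed
    with b show False by simp
  qed
  have "s \<in> h" if s1: "s$1 = 0" for s
  proof -
    have "s = ((s$2*b$3 - s$3*b$2)/d) *\<^sub>R a + ((a$2* s$3 - a$3* s$2)/d) *\<^sub>R b"
      using a1 b1 s1 cramer2[OF d_def d] unfolding vec3_eq by simp
    then show ?thesis using sub a b by (metis subspace_add subspace_mul)
  qed
  then show ?thesis using first0 by auto
qed


lemma span3:
  assumes "v \<in> span {a, b, c :: real^3}"
  shows "\<exists>k1 k2 k3. v = k1 *\<^sub>R a + k2 *\<^sub>R b + k3 *\<^sub>R c"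
proof -
  from assms obtain k1 where "v - k1 *\<^sub>R a \<in> span {b, c}" by (auto simp: span_insert)
  then obtain k2 where "v - k1 *\<^sub>R a - k2 *\<^sub>R b \<in> span {c}" by (auto simp: span_insert)
  then obtain k3 where "v - k1 *\<^sub>R a - k2 *\<^sub>R b = k3 *\<^sub>R c" by (auto simp: span_singleton)
  then have "v = k1 *\<^sub>R a + k2 *\<^sub>R b + k3 *\<^sub>R c" by (simp add: algebra_simps)
  then show ?thesis by blast
qed

lemma lorentz_nonneg:
  assumes "lorentzian g" "g x x = 0" "x \<noteq> 0" "g x y = 0"
  shows "g y y \<ge> 0"
proof (rule ccontr)
  assume neg: "\<not> g y y \<ge> 0"
  from assms(1) obtain e1 e2 e3 where ind: "independent {e1,e2,e3}" and ne: "e1 \<noteq> e2" "e1 \<noteq> e3" "e2 \<noteq> e3"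
    and v: "g e1 e1 = -1" "g e2 e2 = 1" "g e3 e3 = 1" "g e1 e2 = 0" "g e1 e3 = 0" "g e2 e3 = 0"
    and sp: "scalar_product g"
    unfolding lorentzian_def by blast
  have bl: "bilinear g" and sym: "\<And>u v. g u v = g v u" using sp unfolding scalar_product_def by auto
  have v2: "g e2 e1 = 0" "g e3 e1 = 0" "g e3 e2 = 0" using v sym by metis+
  have "card {e1,e2,e3} = 3" using ne by simp
  then have "UNIV \<subseteq> span {e1,e2,e3}"
    by (intro card_ge_dim_independent[OF _ ind]) (auto simp: dim_UNIV)
  then have "x \<in> span {e1,e2,e3}" "y \<in> span {e1,e2,e3}" by auto
  then obtain c1 c2 c3 d1 d2 d3 where x: "x = c1 *\<^sub>R e1 + c2 *\<^sub>R e2 + c3 *\<^sub>R e3"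
    and y: "y = d1 *\<^sub>R e1 + d2 *\<^sub>R e2 + d3 *\<^sub>R e3"
    using span3 by meson
  note b = bil[OF bl]
  have "g x x = c2^2 + c3^2 - c1^2" unfolding x by (simp add: b v v2 power2_eq_square)
  then have h1: "c2^2+c3^2 = c1^2" using assms(2) by simp
  have "g x y = c2*d2 + c3*d3 - c1*d1" unfolding x y by (simp add: b v v2)
  then have h2: "c2*d2+c3*d3 = c1*d1" using assms(4) by simp
  have "g y y = d2^2 + d3^2 - d1^2" unfolding y by (simp add: b v v2 power2_eq_square)
  then have h3: "d2^2+d3^2 < d1^2" using neg by simp
  have h4: "(c1,c2,c3) \<noteq> (0,0,0)" using assms(3) x by auto
  show False using cs2[OF h1 h2 h3 h4] .
qed


lemma h0_S: "h0 = {x. x$1 = 0}"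
proof
  have "subspace {x::real^3. x$1 = 0}" by (auto simp: subspace_def)
  then show "h0 \<subseteq> {x. x$1 = 0}" unfolding h0_def by (intro span_minimal) auto
  show "{x. x$1 = 0} \<subseteq> h0"
  proof
    fix s :: "real^3" assume "s \<in> {x. x$1 = 0}"
    then have "s = s$2 *\<^sub>R X2 + s$3 *\<^sub>R X3" by (simp add: vec3_eq)
    also have "\<dots> \<in> h0" unfolding h0_def
      by (intro span_add span_scale span_base) auto
    finally show "s \<in> h0" .
  qed
qed

lemma rot_inv:
  fixes a b x2 x3 N :: real
  assumes "N = a^2+b^2" "N \<noteq> 0"
  shows "((x2*a - x3*b)*a + (x2*b + x3*a)*b)/N = x2" "((x2*b + x3*a)*a - (x2*a - x3*b)*b)/N = x3"
proof -
  have "((x2*a - x3*b)*a + (x2*b + x3*a)*b) = x2*N" "((x2*b + x3*a)*a - (x2*a - x3*b)*b) = x3*N"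
    unfolding assms(1) by (simp_all add: algebra_simps power2_eq_square)
  then show "((x2*a - x3*b)*a + (x2*b + x3*a)*b)/N = x2" "((x2*b + x3*a)*a - (x2*a - x3*b)*b)/N = x3"
    using assms(2) by simp_all
qed

theorem theorem5p5:
  fixes h :: "(real^3) set" and g :: "real^3 \<Rightarrow> real^3 \<Rightarrow> real"
  assumes "kundt_pair h g"
  shows "\<exists>\<mu>>0. kundt_equivalent h g h0 (g0 \<mu>)"
proof -
  from assms have lor: "lorentzian g" and sa: "subalgebra h" and dh: "dim h = 2"
    and deg: "\<exists>u\<in>h. u \<noteq> 0 \<and> (\<forall>v\<in>h. g u v = 0)"
    unfolding kundt_pair_def by auto
  have hS: "h = {x. x$1 = 0}" using h_eq_S[OF sa dh] .
  have sp: "scalar_product g" using lor unfolding lorentzian_def by auto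
  have bl: "bilinear g" and sym: "\<And>u v. g u v = g v u"
    and nd: "\<And>w. (\<forall>v. g w v = 0) \<Longrightarrow> w = 0" using sp unfolding scalar_product_def by auto
  note b = bil[OF bl]
  have nd3: "w = 0" if "g w X1 = 0" "g w X2 = 0" "g w X3 = 0" for w
  proof (rule nd, intro allI)
    fix v :: "real^3"
    have "v = v$1 *\<^sub>R X1 + v$2 *\<^sub>R X2 + v$3 *\<^sub>R X3" by (simp add: vec3_eq)
    then have "g w v = g w (v$1 *\<^sub>R X1 + v$2 *\<^sub>R X2 + v$3 *\<^sub>R X3)" by simp
    also have "\<dots> = 0" using that by (simp add: b)
    finally show "g w v = 0" .
  qed
  obtain u where u: "u \<in> h" "u \<noteq> 0" "\<And>v. v \<in> h \<Longrightarrow> g u v = 0" using deg by blast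
  have X23: "X2 \<in> h" "X3 \<in> h" using hS by auto
  define k where "k = g u X1"
  have k: "k \<noteq> 0" using nd3[of u] u X23 unfolding k_def by auto
  define n where "n = (1/k) *\<^sub>R u"
  have nh: "n \<in> h" using u(1) hS by (simp add: n_def)
  have n1: "n$1 = 0" using nh hS by simp
  have nnz: "n \<noteq> 0" using u(2) k by (simp add: n_def)
  have nv: "\<And>v. v \<in> h \<Longrightarrow> g n v = 0" using u(3) by (simp add: n_def b)
  have gX1n: "g n X1 = 1" using k by (simp add: n_def b k_def)
  define Jn where "Jn = e02_bracket X1 n"
  have Jc: "Jn$1 = 0" "Jn$2 = - n$3" "Jn$3 = n$2" using n1 by (simp_all add: Jn_def)
  have Jh: "Jn \<in> h" using hS Jc by simp
  have gnn: "g n n = 0" and gnJ: "g n Jn = 0" "g Jn n = 0" using nv nh Jh sym by metis+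
  define \<mu> where "\<mu> = g Jn Jn"
  have mu0: "\<mu> \<ge> 0" unfolding \<mu>_def by (rule lorentz_nonneg[OF lor gnn nnz gnJ(1)])
  define N where "N = (n$2)^2 + (n$3)^2"
  have N: "N \<noteq> 0" using nnz n1 by (auto simp: N_def vec3_eq sum_power2_eq_zero_iff)
  have mu: "\<mu> \<noteq> 0"
  proof
    assume m0: "\<mu> = 0"
    have "N *\<^sub>R X2 = n$2 *\<^sub>R n - n$3 *\<^sub>R Jn" using n1 Jc
      by (simp add: vec3_eq N_def power2_eq_square)
    then have "g Jn (N *\<^sub>R X2) = 0" using gnJ m0 by (simp add: b \<mu>_def)
    then have J2: "g Jn X2 = 0" using N by (simp add: b)
    have "N *\<^sub>R X3 = n$3 *\<^sub>R n + n$2 *\<^sub>R Jn" using n1 Jc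
      by (simp add: vec3_eq N_def power2_eq_square)
    then have "g Jn (N *\<^sub>R X3) = 0" using gnJ m0 by (simp add: b \<mu>_def)
    then have J3: "g Jn X3 = 0" using N by (simp add: b)
    define c where "c = g Jn X1"
    have "Jn - c *\<^sub>R n = 0"
      by (rule nd3) (use J2 J3 gX1n nv X23 in \<open>simp_all add: b c_def\<close>)
    then have "Jn = c *\<^sub>R n" by simp
    then have "- n$3 = c * n$2" "n$2 = c * n$3" using Jc by (simp_all add: vec3_eq)
    then have A: "c * n$2 = - n$3" and B: "n$2 = c * n$3" by simp_all
    have "n$2 * (1 + c^2) = n$2 + c * (c * n$2)" by (simp add: algebra_simps power2_eq_square)
    also have "\<dots> = n$2 - c * n$3" using A by simp
    also have "\<dots> = 0" using B by simp
    finally have "n$2 * (1 + c^2) = 0" .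
    moreover have "1 + c^2 \<noteq> 0" by (metis add_pos_nonneg zero_le_power2 zero_less_one less_irrefl)
    ultimately have "n$2 = 0" by simp
    then have "n$3 = 0" using \<open>- n$3 = c * n$2\<close> by simp
    with \<open>n$2 = 0\<close> n1 nnz show False by (simp add: vec3_eq)
  qed
  have mupos: "\<mu> > 0" using mu0 mu by simp
  define \<beta> where "\<beta> = - g X1 Jn / \<mu>"
  define \<alpha> where "\<alpha> = - (g X1 X1 + 2 * \<beta> * g X1 Jn + \<beta>^2 * \<mu>) / 2"
  define p where "p = X1 + \<alpha> *\<^sub>R n + \<beta> *\<^sub>R Jn"
  have gX1n': "g X1 n = 1" using gX1n sym by metis
  have gJX1: "g Jn X1 = g X1 Jn" using sym by metis
  have gpn: "g p n = 1" "g n p = 1" unfolding p_def using gX1n gX1n' gnn gnJ by (simp_all add: b)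
  have gpJ: "g p Jn = 0" "g Jn p = 0" unfolding p_def using gX1n gX1n' gnn gnJ gJX1 mu
    by (simp_all add: b \<mu>_def[symmetric] \<beta>_def)
  have gpp: "g p p = 0" unfolding p_def using gX1n gX1n' gnn gnJ gJX1 mu
    by (simp add: b \<mu>_def[symmetric] \<alpha>_def algebra_simps power2_eq_square)
  have pc: "p$1 = 1" "p$2 = \<alpha> * n$2 - \<beta> * n$3" "p$3 = \<alpha> * n$3 + \<beta> * n$2"
    using n1 Jc by (simp_all add: p_def)
  define \<psi> where "\<psi> x = x$1 *\<^sub>R p + x$2 *\<^sub>R n + x$3 *\<^sub>R Jn" for x :: "real^3"
  have psic: "\<psi> x $ 1 = x$1" "\<psi> x $ 2 = x$1 * p$2 + x$2 * n$2 - x$3 * n$3"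
    "\<psi> x $ 3 = x$1 * p$3 + x$2 * n$3 + x$3 * n$2" for x
    using pc n1 Jc by (simp_all add: \<psi>_def)
  have gpsi: "g (\<psi> x) (\<psi> y) = g0 \<mu> x y" for x y
    unfolding \<psi>_def g0_def using gpn gpJ gpp gnn gnJ
    by (simp add: b \<mu>_def[symmetric] algebra_simps)
  have psilin: "\<psi> (x + y) = \<psi> x + \<psi> y" "\<psi> (c *\<^sub>R x) = c *\<^sub>R \<psi> x" for x y c
    unfolding \<psi>_def by (simp_all add: algebra_simps)
  have psibr: "\<psi> (e02_bracket a c) = e02_bracket (\<psi> a) (\<psi> c)" for a c
    unfolding vec3_eq psic br_comps by (simp add: algebra_simps)
  define \<phi> where "\<phi> y = (vector [y$1, ((y$2 - y$1 * p$2) * n$2 + (y$3 - y$1 * p$3) * n$3)/N,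
      ((y$3 - y$1 * p$3) * n$2 - (y$2 - y$1 * p$2) * n$3)/N] :: real^3)" for y :: "real^3"
  have phic: "\<phi> y $ 1 = y$1" "\<phi> y $ 2 = ((y$2 - y$1 * p$2) * n$2 + (y$3 - y$1 * p$3) * n$3)/N"
    "\<phi> y $ 3 = ((y$3 - y$1 * p$3) * n$2 - (y$2 - y$1 * p$2) * n$3)/N" for y
    by (simp_all add: \<phi>_def)
  have psiphi: "\<psi> (\<phi> y) = y" for y
    unfolding vec3_eq psic phic using rot_solve[OF N_def N, of "y$2 - y$1 * p$2" "y$3 - y$1 * p$3"]
    by simp
  have phipsi: "\<phi> (\<psi> x) = x" for x
  proof -
    have e2: "\<psi> x $ 2 - \<psi> x $ 1 * p$2 = x$2 * n$2 - x$3 * n$3" by (simp add: psic)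
    have e3: "\<psi> x $ 3 - \<psi> x $ 1 * p$3 = x$2 * n$3 + x$3 * n$2" by (simp add: psic)
    show ?thesis unfolding vec3_eq phic e2 e3 using rot_inv[OF N_def N, of "x$2" "x$3"]
      by (simp add: psic)
  qed
  have philin: "linear \<phi>"
  proof (rule linearI)
    fix x y :: "real^3" and c :: real
    have "\<phi> (x + y) = \<phi> (\<psi> (\<phi> x) + \<psi> (\<phi> y))" by (simp add: psiphi)
    also have "\<dots> = \<phi> x + \<phi> y" by (simp add: psilin(1)[symmetric] phipsi)
    finally show "\<phi> (x + y) = \<phi> x + \<phi> y" .
    have "\<phi> (c *\<^sub>R x) = \<phi> (c *\<^sub>R \<psi> (\<phi> x))" by (simp add: psiphi)
    also have "\<dots> = c *\<^sub>R \<phi> x" by (simp add: psilin(2)[symmetric] phipsi)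
    finally show "\<phi> (c *\<^sub>R x) = c *\<^sub>R \<phi> x" .
  qed
  have phibij: "bij \<phi>" by (rule o_bij[of \<psi>]) (auto simp: psiphi phipsi fun_eq_iff)
  have phibr: "\<phi> (e02_bracket u v) = e02_bracket (\<phi> u) (\<phi> v)" for u v
  proof -
    have "\<phi> (e02_bracket u v) = \<phi> (e02_bracket (\<psi> (\<phi> u)) (\<psi> (\<phi> v)))" by (simp add: psiphi)
    also have "\<dots> = e02_bracket (\<phi> u) (\<phi> v)" by (simp add: psibr[symmetric] phipsi)
    finally show ?thesis .
  qed
  have phiS: "\<phi> ` h = h0"
  proof
    show "\<phi> ` h \<subseteq> h0" unfolding hS h0_S using phic(1) by auto
    show "h0 \<subseteq> \<phi> ` h"
    proof
      fix s assume "s \<in> h0"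
      then have "\<psi> s \<in> h" unfolding hS h0_S using psic(1) by auto
      then show "s \<in> \<phi> ` h" using phipsi by (metis image_eqI)
    qed
  qed
  have phig: "g0 \<mu> (\<phi> x) (\<phi> y) = g x y" for x y
    using gpsi[of "\<phi> x" "\<phi> y"] by (simp add: psiphi)
  show ?thesis
    unfolding kundt_equivalent_def e02_automorphism_def
    using mupos philin phibij phibr phiS phig by blast
qed

end
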